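(* Every Schubert variety $X_w$ ($w\in S_n$) in $GL_n(\mathbb{C})/B$, including $G/B=X_{w_0}$ itself, is Palais–Smale.
   Context: Let $G=GL_n(\mathbb{C})$, $B$ the invertible upper-triangular matrices, and $T$ the diagonal matrices, acting on $G/B$ by left multiplication. Permutations are identified with permutation matrices via $we_i=e_{w(i)}$, and $s_{jk}$ is the transposition of $j$ and $k$. The Schubert variety is $X_w=\overline{BwB/B}$. The Bruhat order is defined by $v\le w$ iff $[v]\in X_w$, and $\ell(w)=\dim X_w$ is the number of pairs $i<j$ with $w^{-1}(i)>w^{-1}(j)$. $w_0$ is the longest permutation. The moment graph of $X_w$ (a GKM variety) has vertices $\{v\in S_n: v\le w\}$ and an (undirected) edge between $v$ and $s_{jk}v$ for every $j<k$ with both $v,s_{jk}v\le w$, labeled by the torus weight $\pm(t_j-t_k)$. A GKM variety is called Palais–Smale if its moment graph can be directed so that there is an edge directed from $v$ to $u$ only if there are more edges directed out of $v$ than out of $u$. *)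

theory Defs
  imports "HOL-Combinatorics.Combinatorics"
begin

text \<open>Permutations of S_n are modelled as functions nat => nat permuting {..<n}
  (indices 0..n-1 instead of 1..n).\<close>

type_synonym perm = "nat \<Rightarrow> nat"

definition Sn :: "nat \<Rightarrow> perm set" where
  "Sn n = {w. w permutes {..<n}}"

definition perm_length :: "nat \<Rightarrow> perm \<Rightarrow> nat" where
  "perm_length n w = card {(i, j). i < j \<and> j < n \<and> inv w i > inv w j}"

definition bruhat_step :: "nat \<Rightarrow> perm \<Rightarrow> perm \<Rightarrow> bool" where
  "bruhat_step n v u \<longleftrightarrow> v \<in> Sn n \<and>
     (\<exists>j k. j < k \<and> k < n \<and> u = transpose j k \<circ> v \<and> perm_length n v < perm_length n u)"

definition bruhat_le :: "nat \<Rightarrow> perm \<Rightarrow> perm \<Rightarrow> bool" where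
  "bruhat_le n v w \<longleftrightarrow> v \<in> Sn n \<and> (bruhat_step n)\<^sup>*\<^sup>* v w"

definition mg_vertices :: "nat \<Rightarrow> perm \<Rightarrow> perm set" where
  "mg_vertices n w = {v \<in> Sn n. bruhat_le n v w}"

definition mg_edges :: "nat \<Rightarrow> perm \<Rightarrow> perm set set" where
  "mg_edges n w = {{v, transpose j k \<circ> v} | v j k.
      j < k \<and> k < n \<and> v \<in> mg_vertices n w \<and> transpose j k \<circ> v \<in> mg_vertices n w}"

definition is_orientation :: "'a set set \<Rightarrow> ('a \<times> 'a) set \<Rightarrow> bool" where
  "is_orientation E D \<longleftrightarrow>
     (\<forall>(x, y) \<in> D. {x, y} \<in> E) \<and>
     (\<forall>e \<in> E. \<exists>x y. e = {x, y} \<and> x \<noteq> y \<and> ((x, y) \<in> D \<longleftrightarrow> (y, x) \<notin> D))"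

definition out_degree :: "('a \<times> 'a) set \<Rightarrow> 'a \<Rightarrow> nat" where
  "out_degree D v = card {u. (v, u) \<in> D}"

definition palais_smale_graph :: "'a set set \<Rightarrow> bool" where
  "palais_smale_graph E \<longleftrightarrow> (\<exists>D. is_orientation E D \<and>
      (\<forall>(v, u) \<in> D. out_degree D u < out_degree D v))"

definition schubert_palais_smale :: "nat \<Rightarrow> perm \<Rightarrow> bool" where
  "schubert_palais_smale n w \<longleftrightarrow> palais_smale_graph (mg_edges n w)"

end

theory Submission
  imports Defs
begin

lemma key_card:
  fixes \<sigma> :: "nat \<Rightarrow> nat"
  assumes jk: "j < k" "k < n" and s: "\<sigma> k < \<sigma> j"
  shows "card {(a, b). a < b \<and> b < n \<and> \<sigma> (transpose j k a) > \<sigma> (transpose j k b)}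
       < card {(a, b). a < b \<and> b < n \<and> \<sigma> a > \<sigma> b}"
proof -
  define t where "t = transpose j k"
  define A where "A = {(a, b). a < b \<and> b < n \<and> \<sigma> (t a) > \<sigma> (t b)}"
  define B where "B = {(a, b). a < b \<and> b < n \<and> \<sigma> a > \<sigma> b}"
  define \<phi> where "\<phi> = (\<lambda>(a::nat, b::nat). if t a < t b then (t a, t b) else (a, b))"
  have fB: "finite B"
    by (rule finite_subset[of _ "{..<n} \<times> {..<n}"]) (auto simp: B_def)
  have jkB: "(j, k) \<in> B" using assms by (auto simp: B_def)
  have img: "\<phi> ` A \<subseteq> B - {(j, k)}"
  proof
    fix p assume "p \<in> \<phi> ` A"
    then obtain a b where ab: "(a, b) \<in> A" "p = \<phi> (a, b)" by auto
    show "p \<in> B - {(j, k)}"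
      using ab assms unfolding A_def B_def \<phi>_def t_def transpose_def
      by (auto split: if_splits)
  qed
  have inj: "inj_on \<phi> A"
    unfolding inj_on_def A_def \<phi>_def t_def transpose_def
    by (auto split: if_splits)
  have "card A = card (\<phi> ` A)" using inj by (simp add: card_image)
  also have "\<dots> \<le> card (B - {(j, k)})" using img fB by (intro card_mono) auto
  also have "\<dots> < card B" using fB jkB by (rule card_Diff1_less)
  finally show ?thesis unfolding A_def B_def t_def .
qed

lemma inv_comp_t:
  assumes "v \<in> Sn n"
  shows "inv (transpose j k \<circ> v) = inv v \<circ> transpose j k"
proof -
  have bv: "bij v" using assms unfolding Sn_def by (auto intro: permutes_bij)
  have "inv (transpose j k \<circ> v) = inv v \<circ> inv (transpose j k)"
    using bv by (simp add: o_inv_distrib bij_betw_transpose_iff)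
  also have "inv (transpose j k) = transpose j k"
    by (simp add: inv_unique_comp)
  finally show ?thesis .
qed

lemma len_dec:
  assumes v: "v \<in> Sn n" and jk: "j < k" "k < n" and s: "inv v k < inv v j"
  shows "perm_length n (transpose j k \<circ> v) < perm_length n v"
  using key_card[OF jk s] unfolding perm_length_def inv_comp_t[OF v] by (simp add: o_def)

lemma t_Sn:
  assumes v: "v \<in> Sn n" and jk: "j < n" "k < n"
  shows "transpose j k \<circ> v \<in> Sn n"
  using assms unfolding Sn_def by (simp add: permutes_compose permutes_swap_id)

lemma down_closed:
  assumes v: "v \<in> mg_vertices n w" and jk: "j < k" "k < n" and s: "inv v k < inv v j"
  shows "transpose j k \<circ> v \<in> mg_vertices n w"
proof -
  have vS: "v \<in> Sn n" using v by (simp add: mg_vertices_def)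
  have uS: "transpose j k \<circ> v \<in> Sn n" using t_Sn[OF vS] jk by simp
  have "transpose j k \<circ> (transpose j k \<circ> v) = v" by (simp add: comp_assoc[symmetric])
  hence st: "bruhat_step n (transpose j k \<circ> v) v"
    unfolding bruhat_step_def using uS jk len_dec[OF vS jk s] by (intro conjI exI[of _ j] exI[of _ k]) auto
  have "(bruhat_step n)\<^sup>*\<^sup>* v w" using v by (simp add: mg_vertices_def bruhat_le_def)
  hence "(bruhat_step n)\<^sup>*\<^sup>* (transpose j k \<circ> v) w" using st by simp
  thus ?thesis using uS by (simp add: mg_vertices_def bruhat_le_def)
qed

lemma t_inj:
  assumes "v \<in> Sn n" "transpose j k \<circ> v = transpose j' k' \<circ> v" "j < k" "j' < k'"
  shows "j = j' \<and> k = k'"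
proof -
  have sv: "surj v" using assms(1) unfolding Sn_def by (metis mem_Collect_eq permutes_surj)
  have "transpose j k = transpose j' k'"
  proof
    fix x
    obtain y where y: "x = v y" using sv by (metis surjD)
    have "(transpose j k \<circ> v) y = (transpose j' k' \<circ> v) y" using assms(2) by simp
    thus "transpose j k x = transpose j' k' x" using y by simp
  qed
  hence e: "\<And>x. transpose j k x = transpose j' k' x" by simp
  have ej: "transpose j' k' j = k" using e[of j] by simp
  have jj: "j = j'"
  proof (rule ccontr)
    assume ne: "j \<noteq> j'"
    show False
    proof (cases "j = k'")
      case True
      hence "transpose j' k' j = j'" by simp
      thus False using ej assms(3,4) True by simp
    next
      case False
      hence "transpose j' k' j = j" using ne by simp
      thus False using ej assms(3) by simp
    qed
  qed
  have "transpose j k' j = k'" by simp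
  hence "k = k'" using ej jj by simp
  thus ?thesis using jj by simp
qed

theorem mainTheorem3:
  fixes n :: nat and w :: perm
  assumes "w \<in> Sn n"
  shows "schubert_palais_smale n w"
proof -
  define V where "V = mg_vertices n w"
  define D where "D = {(v, transpose j k \<circ> v) | v j k. j < k \<and> k < n \<and> v \<in> V \<and> inv v k < inv v j}"
  have Dlen: "perm_length n u < perm_length n v" if "(v, u) \<in> D" for v u
    using that len_dec unfolding D_def V_def mg_vertices_def by blast
  have DV: "u \<in> V" if "(v, u) \<in> D" for v u
    using that down_closed unfolding D_def V_def by blast
  have neq: "transpose j k \<circ> v \<noteq> v" if "v \<in> Sn n" "j < k" for v j k
  proof
    assume h: "transpose j k \<circ> v = v"
    have sv: "surj v" using that(1) unfolding Sn_def by (metis mem_Collect_eq permutes_surj)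
    obtain y where y: "j = v y" using sv by (metis surjD)
    have "(transpose j k \<circ> v) y = v y" using h by simp
    hence "transpose j k j = j" using y by simp
    thus False using that(2) by simp
  qed
  have outdeg: "out_degree D v = perm_length n v" if vV: "v \<in> V" for v
  proof -
    have vS: "v \<in> Sn n" using vV by (simp add: V_def mg_vertices_def)
    have "{u. (v, u) \<in> D} = (\<lambda>(j, k). transpose j k \<circ> v) ` {(i, j). i < j \<and> j < n \<and> inv v i > inv v j}"
    proof (intro set_eqI iffI)
      fix u assume "u \<in> {u. (v, u) \<in> D}"
      then obtain j k where "j < k" "k < n" "inv v k < inv v j" "u = transpose j k \<circ> v"
        unfolding D_def by blast
      thus "u \<in> (\<lambda>(j, k). transpose j k \<circ> v) ` {(i, j). i < j \<and> j < n \<and> inv v i > inv v j}"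
        by (intro image_eqI[of _ _ "(j, k)"]) auto
    next
      fix u assume "u \<in> (\<lambda>(j, k). transpose j k \<circ> v) ` {(i, j). i < j \<and> j < n \<and> inv v i > inv v j}"
      then obtain j k where "j < k" "k < n" "inv v k < inv v j" "u = transpose j k \<circ> v"
        by auto
      thus "u \<in> {u. (v, u) \<in> D}" using vV unfolding D_def by blast
    qed
    moreover have "inj_on (\<lambda>(j, k). transpose j k \<circ> v) {(i, j). i < j \<and> j < n \<and> inv v i > inv v j}"
      unfolding inj_on_def using t_inj[OF vS] by auto
    ultimately show ?thesis unfolding out_degree_def perm_length_def by (simp add: card_image)
  qed
  have orient: "is_orientation (mg_edges n w) D"
    unfolding is_orientation_def
  proof (rule conjI)
    show "\<forall>(x, y) \<in> D. {x, y} \<in> mg_edges n w"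
    proof clarify
      fix x y assume xy: "(x, y) \<in> D"
      then obtain j k where "j < k" "k < n" "x \<in> V" "y = transpose j k \<circ> x" "inv x k < inv x j"
        unfolding D_def by blast
      moreover have "y \<in> V" using DV xy by blast
      ultimately show "{x, y} \<in> mg_edges n w" unfolding mg_edges_def V_def by blast
    qed
  next
    show "\<forall>e \<in> mg_edges n w. \<exists>x y. e = {x, y} \<and> x \<noteq> y \<and> ((x, y) \<in> D \<longleftrightarrow> (y, x) \<notin> D)"
    proof
    fix e assume "e \<in> mg_edges n w"
    then obtain v j k where e: "e = {v, transpose j k \<circ> v}" "j < k" "k < n" "v \<in> V"
        "transpose j k \<circ> v \<in> V"
      unfolding mg_edges_def V_def by blast
    have vS: "v \<in> Sn n" using e(4) by (simp add: V_def mg_vertices_def)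
    have nq: "transpose j k \<circ> v \<noteq> v" using neq vS e(2) by blast
    have bv: "bij v" using vS unfolding Sn_def by (auto intro: permutes_bij)
    have iv: "inj (inv v)" using bv by (simp add: bij_imp_bij_inv bij_is_inj)
    have ijk: "inv v j \<noteq> inv v k" using e(2) iv by (auto dest: injD)
    have asym: "(y, x) \<notin> D" if "(x, y) \<in> D" for x y
      using Dlen that by (meson less_asym)
    show "\<exists>x y. e = {x, y} \<and> x \<noteq> y \<and> ((x, y) \<in> D \<longleftrightarrow> (y, x) \<notin> D)"
    proof (cases "inv v k < inv v j")
      case True
      hence "(v, transpose j k \<circ> v) \<in> D" unfolding D_def using e by blast
      thus ?thesis using e(1) nq asym by blast
    next
      case False
      let ?u = "transpose j k \<circ> v"
      have uu: "transpose j k \<circ> ?u = v" by (simp add: comp_assoc[symmetric])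
      have i1: "inv ?u k = inv v j" "inv ?u j = inv v k" by (simp_all add: inv_comp_t[OF vS])
      have lt: "inv ?u k < inv ?u j" unfolding i1 using False ijk by linarith
      have "(?u, transpose j k \<circ> ?u) \<in> D" unfolding D_def using e(2,3,5) lt by blast
      hence uD: "(?u, v) \<in> D" unfolding uu .
      have ee: "e = {?u, v}" using e(1) by auto
      show ?thesis using ee nq uD asym by blast
    qed
    qed
  qed
  have "\<forall>(v, u) \<in> D. out_degree D u < out_degree D v"
  proof clarify
    fix v u assume vu: "(v, u) \<in> D"
    have "v \<in> V" using vu unfolding D_def by blast
    thus "out_degree D u < out_degree D v" using outdeg DV[OF vu] Dlen[OF vu] by simp
  qed
  thus ?thesis unfolding schubert_palais_smale_def palais_smale_graph_def using orient by blast
qed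

end
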